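(* Let $\lambda>0$ with $\lambda\neq 1$ and $\mu=1/\lambda$, and let $A\in M_3\otimes M_3$ be the $9\times 9$ matrix $$A=\left(\begin{array}{ccc|ccc|ccc} 1&0&0&0&1&0&0&0&1\\ 0&\lambda^2&0&1&0&0&0&0&0\\ 0&0&\mu^2&0&0&0&1&0&0\\ \hline 0&1&0&\mu^2&0&0&0&0&0\\ 1&0&0&0&1&0&0&0&1\\ 0&0&0&0&0&\lambda^2&0&1&0\\ \hline 0&0&1&0&0&0&\lambda^2&0&0\\ 0&0&0&0&0&1&0&\mu^2&0\\ 1&0&0&0&1&0&0&0&1 \end{array}\right).$$ Then $A\in\mathbb{V}_2\setminus\mathbb{V}_1$; that is, $A$ has Schmidt number two.
   Context: Identify $M_3\otimes M_3$ with $3\times 3$ block matrices with $3\times 3$ blocks. For $z\in M_3$ with rows $z_1,z_2,z_3\in\mathbb C^3$ (as column vectors), $\tilde z\tilde z^*$ denotes the block matrix whose $(i,j)$ block is $z_iz_j^*$. For $s=1,2,3$, $\mathbb{V}_s$ is the convex cone generated by $\{\tilde z\tilde z^*:\operatorname{rank} z\le s\}$. The Schmidt number of a positive semi-definite $A$ is the least $s$ with $A\in\mathbb{V}_s$. *)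

theory Defs
  imports "Jordan_Normal_Form.DL_Rank"
begin

text \<open>Elements of M_3 are complex 3x3 matrices (z in carrier_mat 3 3); M_3 (x) M_3 is
  identified with 9x9 complex matrices, row/column index 3*i+a standing for block i,
  in-block index a (indices from 0).\<close>

definition ztilde :: "complex mat \<Rightarrow> complex vec" where
  "ztilde z = vec 9 (\<lambda>k. z $$ (k div 3, k mod 3))"

definition ztilde_proj :: "complex mat \<Rightarrow> complex mat" where
  "ztilde_proj z = mat 9 9 (\<lambda>(r, c). (ztilde z $ r) * cnj (ztilde z $ c))"

text \<open>V_s: the convex cone generated by {z~ z~^* : rank z \<le> s}, i.e. all finite
  nonnegative combinations of such matrices.\<close>
definition VV :: "nat \<Rightarrow> complex mat set" where
  "VV s = {A. \<exists>(n::nat) (c::nat \<Rightarrow> real) (zs::nat \<Rightarrow> complex mat).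
      (\<forall>i<n. c i \<ge> 0 \<and> zs i \<in> carrier_mat 3 3 \<and> vec_space.rank 3 (zs i) \<le> s) \<and>
      A = mat 9 9 (\<lambda>(r, k). \<Sum>i<n. complex_of_real (c i) * (ztilde_proj (zs i) $$ (r, k)))}"

definition A_mat :: "real \<Rightarrow> complex mat" where
  "A_mat lam = (let l = complex_of_real (lam^2); m = complex_of_real ((1/lam)^2) in
    mat_of_rows_list 9
     [[1,0,0, 0,1,0, 0,0,1],
      [0,l,0, 1,0,0, 0,0,0],
      [0,0,m, 0,0,0, 1,0,0],
      [0,1,0, m,0,0, 0,0,0],
      [1,0,0, 0,1,0, 0,0,1],
      [0,0,0, 0,0,l, 0,1,0],
      [0,0,1, 0,0,0, l,0,0],
      [0,0,0, 0,0,1, 0,m,0],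
      [1,0,0, 0,1,0, 0,0,1]])"

end

theory Submission
  imports Defs
begin




lemma det1: fixes A :: "'a::comm_ring_1 mat" assumes "A \<in> carrier_mat 1 1"
  shows "det A = A $$ (0,0)"
  using laplace_expansion_column[OF assms, of 0] assms
  by (simp add: cofactor_def mat_delete_def)

lemma det2: fixes A :: "'a::comm_ring_1 mat" assumes "A \<in> carrier_mat 2 2"
  shows "det A = A $$ (0,0) * A $$ (1,1) - A $$ (0,1) * A $$ (1,0)"
proof -
  have "det A = (\<Sum>i<2. A $$ (i,0) * cofactor A i 0)"
    using laplace_expansion_column[OF assms, of 0] by simp
  also have "\<dots> = A $$ (0,0) * A $$ (1,1) - A $$ (0,1) * A $$ (1,0)"
    using assms
    by (simp add: numeral_2_eq_2 cofactor_def det1 mat_delete_carrier mat_delete_def)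
  finally show ?thesis .
qed

lemma det2': "det (mat (Suc (Suc 0)) (Suc (Suc 0)) f) = f (0,0) * f (1,1) - f (0,1) * f (1,0)"
  by (subst det2) auto

lemma det3: fixes A :: "'a::comm_ring_1 mat" assumes "A \<in> carrier_mat 3 3"
  shows "det A = A $$ (0,0) * (A $$ (1,1) * A $$ (2,2) - A $$ (1,2) * A $$ (2,1))
     - A $$ (1,0) * (A $$ (0,1) * A $$ (2,2) - A $$ (0,2) * A $$ (2,1))
     + A $$ (2,0) * (A $$ (0,1) * A $$ (1,2) - A $$ (0,2) * A $$ (1,1))"
proof -
  have "det A = (\<Sum>i<3. A $$ (i,0) * cofactor A i 0)"
    using laplace_expansion_column[OF assms, of 0] by simp
  also have "\<dots> = A $$ (0,0) * cofactor A 0 0 + A $$ (1,0) * cofactor A 1 0 + A $$ (2,0) * cofactor A 2 0"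
    by (simp add: eval_nat_numeral)
  also have "cofactor A 0 0 = A $$ (1,1) * A $$ (2,2) - A $$ (1,2) * A $$ (2,1)"
    using assms by (simp add: cofactor_def mat_delete_def eval_nat_numeral det2')
  also have "cofactor A 1 0 = - (A $$ (0,1) * A $$ (2,2) - A $$ (0,2) * A $$ (2,1))"
    using assms by (simp add: cofactor_def mat_delete_def eval_nat_numeral det2')
  also have "cofactor A 2 0 = A $$ (0,1) * A $$ (1,2) - A $$ (0,2) * A $$ (1,1)"
    using assms by (simp add: cofactor_def mat_delete_def eval_nat_numeral det2')
  finally show ?thesis by (simp add: algebra_simps)
qed


definition Vr :: "real \<Rightarrow> real list list" where
 "Vr lam = [[1,lam,0, 1/lam,1,0, 0,0,1], [1,-lam,0,-1/lam,1,0,0,0,1],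
            [0,0,1/lam, 0,0,0, lam,0,0], [0,0,0, 0,0,lam, 0,1/lam,0]]"
definition Ar :: "real \<Rightarrow> real list list" where
 "Ar lam = (let l = lam^2; m = (1/lam)^2 in
     [[1,0,0, 0,1,0, 0,0,1],
      [0,l,0, 1,0,0, 0,0,0],
      [0,0,m, 0,0,0, 1,0,0],
      [0,1,0, m,0,0, 0,0,0],
      [1,0,0, 0,1,0, 0,0,1],
      [0,0,0, 0,0,l, 0,1,0],
      [0,0,1, 0,0,0, l,0,0],
      [0,0,0, 0,0,1, 0,m,0],
      [1,0,0, 0,1,0, 0,0,1]])"
definition Cs :: "nat \<Rightarrow> real" where "Cs = (\<lambda>i. [1/2,1/2,1,1] ! i)"
lemma less9: "(r::nat) < 9 \<longleftrightarrow> r = 0 \<or> r = 1 \<or> r = 2 \<or> r = 3 \<or> r = 4 \<or> r = 5 \<or> r = 6 \<or> r = 7 \<or> r = 8"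
  by auto
lemma sum4r: "(\<Sum>i<(4::nat). f i) = f 0 + f 1 + f 2 + (f 3::real)"
  by (simp add: numeral_eq_Suc lessThan_Suc)
lemma real_eq: assumes "lam \<noteq> 0" "r < 9" "k < 9"
  shows "Ar lam ! r ! k = (\<Sum>i<4. Cs i * (Vr lam ! i ! r * Vr lam ! i ! k))"
  using assms(2,3) unfolding less9 sum4r
  by (elim disjE) (simp_all add: Ar_def Vr_def Cs_def Let_def assms(1) power2_eq_square)

definition Zs :: "real \<Rightarrow> nat \<Rightarrow> complex mat" where
  "Zs lam = (\<lambda>i. [mat_of_rows_list 3 [[1, of_real lam, 0],[of_real (1/lam), 1, 0],[0,0,1]],
                   mat_of_rows_list 3 [[1, - of_real lam, 0],[- of_real (1/lam), 1, 0],[0,0,1]],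
                   mat_of_rows_list 3 [[0,0,of_real (1/lam)],[0,0,0],[of_real lam,0,0]],
                   mat_of_rows_list 3 [[0,0,0],[0,0,of_real lam],[0,of_real (1/lam),0]]] ! i)"

lemma less4: "(i::nat) < 4 \<longleftrightarrow> i = 0 \<or> i = 1 \<or> i = 2 \<or> i = 3" by auto

lemma Zs_entry: assumes "i < 4" "r < 9" shows "Zs lam i $$ (r div 3, r mod 3) = of_real (Vr lam ! i ! r)"
  using assms unfolding less4 less9
  by (elim disjE) (simp_all add: Zs_def Vr_def mat_of_rows_list_def)

lemma A_entry: assumes "r < 9" "k < 9" shows "A_mat lam $$ (r,k) = of_real (Ar lam ! r ! k)"
proof -
  have "A_mat lam = mat_of_rows_list 9 (map (map complex_of_real) (Ar lam))"
    by (simp add: A_mat_def Ar_def Let_def)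
  moreover have "length (Ar lam ! r) = 9" using assms(1) unfolding less9
    by (elim disjE) (simp_all add: Ar_def Let_def)
  moreover have "length (Ar lam) = 9" by (simp add: Ar_def Let_def)
  ultimately show ?thesis using assms by (simp add: mat_of_rows_list_def)
qed

lemma zt: "r < 9 \<Longrightarrow> ztilde z $ r = z $$ (r div 3, r mod 3)" by (simp add: ztilde_def)
lemma ztp: "r < 9 \<Longrightarrow> k < 9 \<Longrightarrow> ztilde_proj z $$ (r,k) = z $$ (r div 3, r mod 3) * cnj (z $$ (k div 3, k mod 3))"
  by (simp add: ztilde_proj_def zt)

lemma rank2I: fixes z :: "complex mat" assumes "z \<in> carrier_mat 3 3" "det z = 0"
  shows "vec_space.rank 3 z \<le> 2"
  using vec_space.det_zero_low_rank[OF assms] by simp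

lemma inV2: fixes lam :: real assumes "lam > 0" shows "A_mat lam \<in> VV 2"
proof -
  have ne: "lam \<noteq> 0" using assms by simp
  have car: "\<forall>i<4. Zs lam i \<in> carrier_mat 3 3"
    by (auto simp: Zs_def less4 mat_of_rows_list_def)
  have dt: "\<forall>i<4. det (Zs lam i) = 0"
  proof (intro allI impI)
    fix i :: nat assume "i < 4"
    then have "i = 0 \<or> i = 1 \<or> i = 2 \<or> i = 3" by auto
    then show "det (Zs lam i) = 0"
      by (elim disjE; subst det3; auto simp: Zs_def mat_of_rows_list_def ne)
  qed
  have rk: "\<forall>i<4. vec_space.rank 3 (Zs lam i) \<le> 2" using car dt rank2I by blast
  have eq: "A_mat lam = mat 9 9 (\<lambda>(r, k). \<Sum>i<4. complex_of_real (Cs i) * (ztilde_proj (Zs lam i) $$ (r, k)))"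
  proof (rule eq_matI)
    fix r k assume "r < dim_row (mat 9 9 (\<lambda>(r, k). \<Sum>i<4. complex_of_real (Cs i) * (ztilde_proj (Zs lam i) $$ (r, k))))"
      "k < dim_col (mat 9 9 (\<lambda>(r, k). \<Sum>i<4. complex_of_real (Cs i) * (ztilde_proj (Zs lam i) $$ (r, k))))"
    then have r: "r < 9" and k: "k < 9" by auto
    have "(\<Sum>i<4. complex_of_real (Cs i) * (ztilde_proj (Zs lam i) $$ (r, k)))
        = (\<Sum>i<4. complex_of_real (Cs i * (Vr lam ! i ! r * Vr lam ! i ! k)))"
      by (rule sum.cong) (simp_all add: ztp r k Zs_entry)
    also have "\<dots> = complex_of_real (Ar lam ! r ! k)"
      by (simp add: real_eq[OF ne r k])
    finally show "A_mat lam $$ (r, k) = mat 9 9 (\<lambda>(r, k). \<Sum>i<4. complex_of_real (Cs i) * (ztilde_proj (Zs lam i) $$ (r, k))) $$ (r, k)"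
      using r k by (simp add: A_entry)
  qed (auto simp: A_mat_def mat_of_rows_list_def Let_def)
  show ?thesis unfolding VV_def
    by (rule CollectI, rule exI[of _ 4], rule exI[of _ Cs], rule exI[of _ "Zs lam"])
       (use rk car eq in \<open>auto simp: Cs_def less4\<close>)
qed


lemma alg:
  fixes a ua ub uc ud ue uf L :: complex and lam :: real
  assumes L: "L = of_real lam" and lp: "lam > 0" "lam \<noteq> 1"
  and h3: "ua / L = L * uc" and h4: "L * ub = ue / L" and h5: "ud / L = L * uf"
  and m2: "ua * ud - ub * a = 0" and m3: "uc * uf - a * ue = 0" and m4: "a * a - ub * ue = 0"
  shows "a = 0"
proof -
  have L0: "L \<noteq> 0" using L lp by simp
  have L6: "L^6 \<noteq> 1"
  proof
    assume "L^6 = 1"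
    then have "lam^6 = 1" using L by (metis of_real_eq_1_iff of_real_power)
    then have "lam^6 = 1^6" by simp
    then have "lam = 1" using lp by (intro power_eq_imp_eq_base[of lam 6 1]) auto
    then show False using lp by simp
  qed
  have f10: "uc = ua / L^2" using h3 L0 by (simp add: field_simps power2_eq_square)
  have f20: "ue = L^2 * ub" using h4 L0 by (simp add: field_simps power2_eq_square)
  have f21: "uf = ud / L^2" using h5 L0 by (simp add: field_simps power2_eq_square)
  have "ua * ud / L^4 = a * L^2 * ub" using m3 f10 f21 f20 L0
    by (simp add: field_simps power2_eq_square eval_nat_numeral)
  then have "a * ub / L^4 = a * L^2 * ub" using m2 by (simp add: algebra_simps)
  then have "a * ub = a * ub * L^6" using L0 by (simp add: field_simps eval_nat_numeral)
  then have "a * ub * (L^6 - 1) = 0" by (simp add: algebra_simps)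
  then have ax: "a * ub = 0" using L6 by simp
  have "a * a = L^2 * ub * ub" using m4 f20 by (simp add: algebra_simps)
  then have "a * a * a = L^2 * ub * (a * ub)" by (simp add: algebra_simps)
  then have "a * a * a = 0" using ax by simp
  then show ?thesis by simp
qed


lemma rank1_det: fixes z :: "complex mat"
  assumes z: "z \<in> carrier_mat 3 3" and r: "vec_space.rank 3 z \<le> 1"
  shows "det (z + mat 3 3 (\<lambda>(r,c). f r * g c)) = 0"
proof -
  let ?E = "mat 3 3 (\<lambda>(r,c). f r * g c) :: complex mat"
  have E: "?E \<in> carrier_mat 3 3" by simp
  have rE: "vec_space.rank 3 ?E \<le> 1"
    by (rule vec_space.rank_le_1_product_entries[OF E]) auto
  have "vec_space.rank 3 (z + ?E) \<le> vec_space.rank 3 z + vec_space.rank 3 ?E"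
    by (rule vec_space.rank_subadditive[OF z E])
  with r rE have "vec_space.rank 3 (z + ?E) \<noteq> 3" by linarith
  then show ?thesis using vec_space.det_rank_iff[of "z + ?E" 3] z by auto
qed

lemma kernel_lemma:
  fixes c :: "nat \<Rightarrow> real" and u v :: "nat \<Rightarrow> complex" and al be :: complex
  assumes c: "\<forall>i<n. c i \<ge> 0"
  and h: "al * cnj al * (\<Sum>i<n. of_real (c i) * (u i * cnj (u i)))
        + al * cnj be * (\<Sum>i<n. of_real (c i) * (u i * cnj (v i)))
        + be * cnj al * (\<Sum>i<n. of_real (c i) * (v i * cnj (u i)))
        + be * cnj be * (\<Sum>i<n. of_real (c i) * (v i * cnj (v i))) = 0"
  shows "\<forall>i<n. c i = 0 \<or> al * u i + be * v i = 0"
proof -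
  let ?w = "\<lambda>i. al * u i + be * v i"
  have "(\<Sum>i<n. of_real (c i) * (?w i * cnj (?w i))) = 0"
    using h by (simp add: sum_distrib_left sum.distrib algebra_simps)
  moreover have "\<And>i. ?w i * cnj (?w i) = of_real ((cmod (?w i))^2)"
    by (metis complex_norm_square of_real_power)
  ultimately have "complex_of_real (\<Sum>i<n. c i * (cmod (?w i))^2) = 0" by simp
  then have s0: "(\<Sum>i<n. c i * (cmod (?w i))^2) = 0" by (simp only: of_real_eq_0_iff)
  have "\<forall>i\<in>{..<n}. c i * (cmod (?w i))^2 = 0"
    using sum_nonneg_eq_0_iff[of "{..<n}" "\<lambda>i. c i * (cmod (?w i))^2"] s0 c by auto
  then show ?thesis by auto
qed

lemma cofs:
  fixes x00 x01 x02 x10 x11 x12 x20 x21 x22 :: complex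
  assumes e0: "x00 * (x11 * x22 - x12 * x21) - x10 * (x01 * x22 - x02 * x21) + x20 * (x01 * x12 - x02 * x11) = 0"
  and e20: "x00 * (x11 * x22 - x12 * x21) - x10 * (x01 * x22 - x02 * x21) + (x20 + 1) * (x01 * x12 - x02 * x11) = 0"
  and e02: "x00 * (x11 * x22 - x12 * x21) - x10 * (x01 * x22 - (x02 + 1) * x21) + x20 * (x01 * x12 - (x02 + 1) * x11) = 0"
  and e11: "x00 * ((x11 + 1) * x22 - x12 * x21) - x10 * (x01 * x22 - x02 * x21) + x20 * (x01 * x12 - x02 * (x11 + 1)) = 0"
  shows "x01 * x12 - x02 * x11 = 0" "x10 * x21 - x11 * x20 = 0" "x00 * x22 - x02 * x20 = 0"
proof -
  have "x01 * x12 - x02 * x11 = (x00 * (x11 * x22 - x12 * x21) - x10 * (x01 * x22 - x02 * x21) + (x20 + 1) * (x01 * x12 - x02 * x11))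
     - (x00 * (x11 * x22 - x12 * x21) - x10 * (x01 * x22 - x02 * x21) + x20 * (x01 * x12 - x02 * x11))"
    by (simp add: algebra_simps)
  then show "x01 * x12 - x02 * x11 = 0" using e0 e20 by simp
  have "x10 * x21 - x11 * x20 = (x00 * (x11 * x22 - x12 * x21) - x10 * (x01 * x22 - (x02 + 1) * x21) + x20 * (x01 * x12 - (x02 + 1) * x11))
     - (x00 * (x11 * x22 - x12 * x21) - x10 * (x01 * x22 - x02 * x21) + x20 * (x01 * x12 - x02 * x11))"
    by (simp add: algebra_simps)
  then show "x10 * x21 - x11 * x20 = 0" using e0 e02 by simp
  have "x00 * x22 - x02 * x20 = (x00 * ((x11 + 1) * x22 - x12 * x21) - x10 * (x01 * x22 - x02 * x21) + x20 * (x01 * x12 - x02 * (x11 + 1)))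
     - (x00 * (x11 * x22 - x12 * x21) - x10 * (x01 * x22 - x02 * x21) + x20 * (x01 * x12 - x02 * x11))"
    by (simp add: algebra_simps)
  then show "x00 * x22 - x02 * x20 = 0" using e0 e11 by simp
qed

lemma notV1: fixes lam :: real assumes lp: "lam > 0" "lam \<noteq> 1" shows "A_mat lam \<notin> VV 1"
proof
  assume "A_mat lam \<in> VV 1"
  then have "\<exists>(n::nat) (c::nat \<Rightarrow> real) (zs::nat \<Rightarrow> complex mat).
      (\<forall>i<n. c i \<ge> 0 \<and> zs i \<in> carrier_mat 3 3 \<and> vec_space.rank 3 (zs i) \<le> 1) \<and>
      A_mat lam = mat 9 9 (\<lambda>(r, k). \<Sum>i<n. complex_of_real (c i) * (ztilde_proj (zs i) $$ (r, k)))"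
    by (simp only: VV_def mem_Collect_eq)
  then show False
  proof (elim exE conjE)
  fix n :: nat and c :: "nat \<Rightarrow> real" and zs :: "nat \<Rightarrow> complex mat" assume H: "\<forall>i<n. c i \<ge> 0 \<and> zs i \<in> carrier_mat 3 3 \<and> vec_space.rank 3 (zs i) \<le> 1"
   and Aeq: "A_mat lam = mat 9 9 (\<lambda>(r,k). \<Sum>i<n. complex_of_real (c i) * (ztilde_proj (zs i) $$ (r,k)))"
  have ne: "lam \<noteq> 0" using lp by simp
  define S where "S p q = (\<Sum>i<n. complex_of_real (c i) * (zs i $$ (p div 3, p mod 3) * cnj (zs i $$ (q div 3, q mod 3))))" for p q
  have AS: "complex_of_real (Ar lam ! p ! q) = S p q" if "p < 9" "q < 9" for p q
  proof -
    have "complex_of_real (Ar lam ! p ! q) = A_mat lam $$ (p,q)" using A_entry that by simp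
    also have "\<dots> = (\<Sum>i<n. complex_of_real (c i) * (ztilde_proj (zs i) $$ (p,q)))"
      using that by (subst Aeq) simp
    also have "\<dots> = S p q" unfolding S_def using that by (simp add: ztp)
    finally show ?thesis .
  qed
  have c0: "\<forall>i<n. c i \<ge> 0" using H by blast
  have K: "\<forall>i<n. c i = 0 \<or> al * zs i $$ (p div 3, p mod 3) + be * zs i $$ (q div 3, q mod 3) = 0"
    if "p < 9" "q < 9" and h: "al * cnj al * of_real (Ar lam ! p ! p) + al * cnj be * of_real (Ar lam ! p ! q)
       + be * cnj al * of_real (Ar lam ! q ! p) + be * cnj be * of_real (Ar lam ! q ! q) = 0" for p q al be
    apply (rule kernel_lemma[OF c0])
    using h unfolding AS[OF that(1) that(1)] AS[OF that(1) that(2)] AS[OF that(2) that(1)] AS[OF that(2) that(2)] S_def .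
  have k1: "\<forall>i<n. c i = 0 \<or> 1 * zs i $$ (0,0) + (-1) * zs i $$ (1,1) = 0"
    using K[of 0 4 1 "-1"] by (simp add: Ar_def Let_def)
  have k2: "\<forall>i<n. c i = 0 \<or> 1 * zs i $$ (1,1) + (-1) * zs i $$ (2,2) = 0"
    using K[of 4 8 1 "-1"] by (simp add: Ar_def Let_def)
  have k3: "\<forall>i<n. c i = 0 \<or> of_real (1/lam) * zs i $$ (0,1) + (- of_real lam) * zs i $$ (1,0) = 0"
  proof -
    let ?al = "of_real (1/lam) :: complex" and ?be = "- of_real lam :: complex"
    have "?al * cnj ?al * of_real (Ar lam ! 1 ! 1) + ?al * cnj ?be * of_real (Ar lam ! 1 ! 3)
       + ?be * cnj ?al * of_real (Ar lam ! 3 ! 1) + ?be * cnj ?be * of_real (Ar lam ! 3 ! 3) = 0"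
      by (simp add: Ar_def Let_def ne power2_eq_square)
    from K[OF _ _ this] show ?thesis by simp
  qed
  have k4: "\<forall>i<n. c i = 0 \<or> of_real lam * zs i $$ (0,2) + (- of_real (1/lam)) * zs i $$ (2,0) = 0"
  proof -
    let ?al = "of_real lam :: complex" and ?be = "- of_real (1/lam) :: complex"
    have "?al * cnj ?al * of_real (Ar lam ! 2 ! 2) + ?al * cnj ?be * of_real (Ar lam ! 2 ! 6)
       + ?be * cnj ?al * of_real (Ar lam ! 6 ! 2) + ?be * cnj ?be * of_real (Ar lam ! 6 ! 6) = 0"
      by (simp add: Ar_def Let_def ne power2_eq_square)
    from K[OF _ _ this] show ?thesis by simp
  qed
  have k5: "\<forall>i<n. c i = 0 \<or> of_real (1/lam) * zs i $$ (1,2) + (- of_real lam) * zs i $$ (2,1) = 0"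
  proof -
    let ?al = "of_real (1/lam) :: complex" and ?be = "- of_real lam :: complex"
    have "?al * cnj ?al * of_real (Ar lam ! 5 ! 5) + ?al * cnj ?be * of_real (Ar lam ! 5 ! 7)
       + ?be * cnj ?al * of_real (Ar lam ! 7 ! 5) + ?be * cnj ?be * of_real (Ar lam ! 7 ! 7) = 0"
      by (simp add: Ar_def Let_def ne power2_eq_square)
    from K[OF _ _ this] show ?thesis by simp
  qed
  have z0: "c i = 0 \<or> zs i $$ (0,0) = 0" if i: "i < n" for i
  proof (cases "c i = 0")
    case False
    let ?z = "zs i"
    have zc: "?z \<in> carrier_mat 3 3" and zr: "vec_space.rank 3 ?z \<le> 1" using H i by auto
    have d0: "det (?z + mat 3 3 (\<lambda>(r,c). (\<lambda>_. 0) r * (\<lambda>_. 0) c)) = 0" by (rule rank1_det[OF zc zr])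
    have d20: "det (?z + mat 3 3 (\<lambda>(r,c). (\<lambda>r. if r = 2 then 1 else 0) r * (\<lambda>c. if c = 0 then 1 else 0) c)) = 0" by (rule rank1_det[OF zc zr])
    have d02: "det (?z + mat 3 3 (\<lambda>(r,c). (\<lambda>r. if r = 0 then 1 else 0) r * (\<lambda>c. if c = 2 then 1 else 0) c)) = 0" by (rule rank1_det[OF zc zr])
    have d11: "det (?z + mat 3 3 (\<lambda>(r,c). (\<lambda>r. if r = 1 then 1 else 0) r * (\<lambda>c. if c = 1 then 1 else 0) c)) = 0" by (rule rank1_det[OF zc zr])
    note dd = d0 d20 d02 d11
    have cz: "?z \<in> carrier_mat 3 3" by (rule zc)
    have dd': "det (?z + mat 3 3 f) = (?z + mat 3 3 f) $$ (0,0) * ((?z + mat 3 3 f) $$ (1,1) * (?z + mat 3 3 f) $$ (2,2) - (?z + mat 3 3 f) $$ (1,2) * (?z + mat 3 3 f) $$ (2,1))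
     - (?z + mat 3 3 f) $$ (1,0) * ((?z + mat 3 3 f) $$ (0,1) * (?z + mat 3 3 f) $$ (2,2) - (?z + mat 3 3 f) $$ (0,2) * (?z + mat 3 3 f) $$ (2,1))
     + (?z + mat 3 3 f) $$ (2,0) * ((?z + mat 3 3 f) $$ (0,1) * (?z + mat 3 3 f) $$ (1,2) - (?z + mat 3 3 f) $$ (0,2) * (?z + mat 3 3 f) $$ (1,1))" for f
      by (rule det3) (use zc in auto)
    have e0: "?z $$ (0,0) * (?z $$ (1,1) * ?z $$ (2,2) - ?z $$ (1,2) * ?z $$ (2,1))
     - ?z $$ (1,0) * (?z $$ (0,1) * ?z $$ (2,2) - ?z $$ (0,2) * ?z $$ (2,1))
     + ?z $$ (2,0) * (?z $$ (0,1) * ?z $$ (1,2) - ?z $$ (0,2) * ?z $$ (1,1)) = 0"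
      using d0 unfolding dd' using zc by simp
    have e20: "?z $$ (0,0) * (?z $$ (1,1) * ?z $$ (2,2) - ?z $$ (1,2) * ?z $$ (2,1))
     - ?z $$ (1,0) * (?z $$ (0,1) * ?z $$ (2,2) - ?z $$ (0,2) * ?z $$ (2,1))
     + (?z $$ (2,0) + 1) * (?z $$ (0,1) * ?z $$ (1,2) - ?z $$ (0,2) * ?z $$ (1,1)) = 0"
      using d20 unfolding dd' using zc by simp
    have e02: "?z $$ (0,0) * (?z $$ (1,1) * ?z $$ (2,2) - ?z $$ (1,2) * ?z $$ (2,1))
     - ?z $$ (1,0) * (?z $$ (0,1) * ?z $$ (2,2) - (?z $$ (0,2) + 1) * ?z $$ (2,1))
     + ?z $$ (2,0) * (?z $$ (0,1) * ?z $$ (1,2) - (?z $$ (0,2) + 1) * ?z $$ (1,1)) = 0"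
      using d02 unfolding dd' using zc by simp
    have e11: "?z $$ (0,0) * ((?z $$ (1,1) + 1) * ?z $$ (2,2) - ?z $$ (1,2) * ?z $$ (2,1))
     - ?z $$ (1,0) * (?z $$ (0,1) * ?z $$ (2,2) - ?z $$ (0,2) * ?z $$ (2,1))
     + ?z $$ (2,0) * (?z $$ (0,1) * ?z $$ (1,2) - ?z $$ (0,2) * (?z $$ (1,1) + 1)) = 0"
      using d11 unfolding dd' using zc by simp
    have m2: "?z $$ (0,1) * ?z $$ (1,2) - ?z $$ (0,2) * ?z $$ (1,1) = 0" by (rule cofs(1)[OF e0 e20 e02 e11])
    have m3: "?z $$ (1,0) * ?z $$ (2,1) - ?z $$ (1,1) * ?z $$ (2,0) = 0" by (rule cofs(2)[OF e0 e20 e02 e11])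
    have m4: "?z $$ (0,0) * ?z $$ (2,2) - ?z $$ (0,2) * ?z $$ (2,0) = 0" by (rule cofs(3)[OF e0 e20 e02 e11])
    have kk1: "1 * ?z $$ (0,0) + (-1) * ?z $$ (1,1) = 0" using k1 i False by blast
    have kk2: "1 * ?z $$ (1,1) + (-1) * ?z $$ (2,2) = 0" using k2 i False by blast
    have kk3: "of_real (1/lam) * ?z $$ (0,1) + (- of_real lam) * ?z $$ (1,0) = 0" using k3 i False by blast
    have kk4: "of_real lam * ?z $$ (0,2) + (- of_real (1/lam)) * ?z $$ (2,0) = 0" using k4 i False by blast
    have kk5: "of_real (1/lam) * ?z $$ (1,2) + (- of_real lam) * ?z $$ (2,1) = 0" using k5 i False by blast
    have a11: "?z $$ (1,1) = ?z $$ (0,0)" using kk1 by simp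
    have a22: "?z $$ (2,2) = ?z $$ (0,0)" using kk1 kk2 by simp
    have "?z $$ (0,0) = 0"
    proof (rule alg[where L = "of_real lam" and lam = lam and ua = "?z $$ (0,1)" and ub = "?z $$ (0,2)"
        and uc = "?z $$ (1,0)" and ud = "?z $$ (1,2)" and ue = "?z $$ (2,0)" and uf = "?z $$ (2,1)"])
      show "complex_of_real lam = complex_of_real lam" by simp
      show "lam > 0" "lam \<noteq> 1" using lp by auto
      show "?z $$ (0,1) / complex_of_real lam = complex_of_real lam * ?z $$ (1,0)"
        using kk3 ne by (simp add: field_simps)
      show "complex_of_real lam * ?z $$ (0,2) = ?z $$ (2,0) / complex_of_real lam"
        using kk4 ne by (simp add: field_simps)
      show "?z $$ (1,2) / complex_of_real lam = complex_of_real lam * ?z $$ (2,1)"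
        using kk5 ne by (simp add: field_simps)
      show "?z $$ (0,1) * ?z $$ (1,2) - ?z $$ (0,2) * ?z $$ (0,0) = 0" using m2 a11 by simp
      show "?z $$ (1,0) * ?z $$ (2,1) - ?z $$ (0,0) * ?z $$ (2,0) = 0" using m3 a11 by simp
      show "?z $$ (0,0) * ?z $$ (0,0) - ?z $$ (0,2) * ?z $$ (2,0) = 0" using m4 a22 by simp
    qed
    then show ?thesis by simp
  qed simp
  have "S 0 0 = 0" unfolding S_def
    by (rule sum.neutral) (use z0 in auto)
  moreover have "complex_of_real (Ar lam ! 0 ! 0) = 1" by (simp add: Ar_def Let_def)
  ultimately show False using AS[of 0 0] by simp
  qed
qed


theorem mainTheorem3:
  fixes lam :: real
  assumes "lam > 0" and "lam \<noteq> 1"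
  shows "A_mat lam \<in> VV 2 \<and> A_mat lam \<notin> VV 1"
  using inV2[OF assms(1)] notV1[OF assms] by blast

end
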